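(* Let $M$ be a finite abelian group of exponent greater than $2$ and let $f$ be a half-automorphism of $L_M$. Then for every $x\in M$ there is a unique $f''(x)\in M$ with $f(1,x)=(1,f''(x))$, and the map $f'':M\to M$ is an automorphism of $M$.
   Context: Let $K=\{1,a,b,c\}$ be the Klein four-group. Set $L_M=K\times M$ with the operation $(A,x)*(B,y)=(AB,xy)$ if $B=1$, and $(A,x)*(B,y)=(AB,x^{-1}y)$ if $B\neq 1$. A half-automorphism of a loop $L$ is a bijection $f:L\to L$ such that $f(XY)\in\{f(X)f(Y),f(Y)f(X)\}$ for all $X,Y\in L$. *)

theory Defs
  imports "HOL-Algebra.Algebra"
begin

datatype klein = K1 | Ka | Kb | Kc

fun kmult :: "klein \<Rightarrow> klein \<Rightarrow> klein" where
  "kmult K1 y = y"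
| "kmult x K1 = x"
| "kmult Ka Ka = K1" | "kmult Kb Kb = K1" | "kmult Kc Kc = K1"
| "kmult Ka Kb = Kc" | "kmult Kb Ka = Kc"
| "kmult Ka Kc = Kb" | "kmult Kc Ka = Kb"
| "kmult Kb Kc = Ka" | "kmult Kc Kb = Ka"

definition group_exponent :: "('a, 'b) monoid_scheme \<Rightarrow> nat" where
  "group_exponent G = (LEAST n. 0 < n \<and> (\<forall>x\<in>carrier G. x [^]\<^bsub>G\<^esub> n = \<one>\<^bsub>G\<^esub>))"

definition LM_carrier :: "('a, 'b) monoid_scheme \<Rightarrow> (klein \<times> 'a) set" where
  "LM_carrier M = UNIV \<times> carrier M"

definition LM_mult :: "('a, 'b) monoid_scheme \<Rightarrow> klein \<times> 'a \<Rightarrow> klein \<times> 'a \<Rightarrow> klein \<times> 'a" where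
  "LM_mult M p q =
     (if fst q = K1 then (kmult (fst p) (fst q), monoid.mult M (snd p) (snd q))
      else (kmult (fst p) (fst q), monoid.mult M (m_inv M (snd p)) (snd q)))"

definition half_automorphism :: "'c set \<Rightarrow> ('c \<Rightarrow> 'c \<Rightarrow> 'c) \<Rightarrow> ('c \<Rightarrow> 'c) \<Rightarrow> bool" where
  "half_automorphism S m f \<longleftrightarrow> bij_betw f S S \<and>
     (\<forall>u\<in>S. \<forall>v\<in>S. f (m u v) \<in> {m (f u) (f v), m (f v) (f u)})"

end

theory Submission
  imports Defs
begin

lemma kmult_self: "kmult A A = K1"
  by (cases A) auto

lemma kmult_K1_iff: "kmult A B = A \<longleftrightarrow> B = K1"
  by (cases A; cases B) auto

theorem proposition4p9:
  fixes M :: "('a, 'b) monoid_scheme" and f :: "klein \<times> 'a \<Rightarrow> klein \<times> 'a"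
  assumes "comm_group M" and "finite (carrier M)"
    and "group_exponent M > 2"
    and "half_automorphism (LM_carrier M) (LM_mult M) f"
  shows "(\<forall>x\<in>carrier M. \<exists>!y. y \<in> carrier M \<and> f (K1, x) = (K1, y))
         \<and> (\<lambda>x. THE y. y \<in> carrier M \<and> f (K1, x) = (K1, y)) \<in> iso M M"
proof -
  interpret comm_group M by fact
  let ?S = "LM_carrier M" and ?m = "LM_mult M"
  have S: "\<And>A x. (A, x) \<in> ?S \<longleftrightarrow> x \<in> carrier M" by (simp add: LM_carrier_def)
  have bij: "bij_betw f ?S ?S" and hom: "\<And>u v. u \<in> ?S \<Longrightarrow> v \<in> ?S \<Longrightarrow> f (?m u v) \<in> {?m (f u) (f v), ?m (f v) (f u)}"
    using assms(4) unfolding half_automorphism_def by auto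
  have inj: "inj_on f ?S" using bij bij_betw_def by blast
  have fS: "\<And>u. u \<in> ?S \<Longrightarrow> f u \<in> ?S" using bij bij_betwE by blast
  have m11: "\<And>x y. ?m (K1, x) (K1, y) = (K1, x \<otimes>\<^bsub>M\<^esub> y)" by (simp add: LM_mult_def)
  have sqf: "\<And>u. u \<in> ?S \<Longrightarrow> f (?m u u) = ?m (f u) (f u)" using hom by fastforce
  have f1: "f (K1, \<one>\<^bsub>M\<^esub>) = (K1, \<one>\<^bsub>M\<^esub>)"
  proof -
    obtain A w where Aw: "f (K1, \<one>\<^bsub>M\<^esub>) = (A, w)" by (cases "f (K1, \<one>\<^bsub>M\<^esub>)")
    have wc: "w \<in> carrier M" using fS[of "(K1,\<one>\<^bsub>M\<^esub>)"] Aw S by auto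
    have "f (?m (K1,\<one>\<^bsub>M\<^esub>) (K1,\<one>\<^bsub>M\<^esub>)) = ?m (A,w) (A,w)" using sqf[of "(K1,\<one>\<^bsub>M\<^esub>)"] Aw S by auto
    hence eq: "(A, w) = ?m (A,w) (A,w)" using Aw m11 by simp
    show ?thesis
    proof (cases "A = K1")
      case True
      with eq have "w = w \<otimes>\<^bsub>M\<^esub> w" by (simp add: LM_mult_def)
      hence "w = \<one>\<^bsub>M\<^esub>" using wc by (metis l_cancel_one r_one)
      with True Aw show ?thesis by simp
    next
      case False
      with eq have "A = K1" by (simp add: LM_mult_def kmult_self)
      with False show ?thesis by simp
    qed
  qed
  have nsq: "fst (f (K1, x)) = K1" if xc: "x \<in> carrier M" and xx: "x \<otimes>\<^bsub>M\<^esub> x \<noteq> \<one>\<^bsub>M\<^esub>" for x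
  proof (rule ccontr)
    assume ne: "fst (f (K1, x)) \<noteq> K1"
    obtain A w where Aw: "f (K1, x) = (A, w)" by (cases "f (K1, x)")
    have wc: "w \<in> carrier M" using fS[of "(K1,x)"] Aw S xc by auto
    have "f (K1, x \<otimes>\<^bsub>M\<^esub> x) = ?m (A,w) (A,w)" using sqf[of "(K1,x)"] Aw S xc m11 by auto
    also have "\<dots> = (K1, \<one>\<^bsub>M\<^esub>)" using ne Aw wc by (simp add: LM_mult_def kmult_self)
    finally have "f (K1, x \<otimes>\<^bsub>M\<^esub> x) = f (K1, \<one>\<^bsub>M\<^esub>)" using f1 by simp
    hence "(K1, x \<otimes>\<^bsub>M\<^esub> x) = (K1, \<one>\<^bsub>M\<^esub>)" apply (rule inj_onD[OF inj]) apply (simp_all add: LM_carrier_def xc) done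
    with xx show False by simp
  qed
  obtain z where zc: "z \<in> carrier M" and zz: "z \<otimes>\<^bsub>M\<^esub> z \<noteq> \<one>\<^bsub>M\<^esub>"
  proof -
    have "\<exists>z\<in>carrier M. z \<otimes>\<^bsub>M\<^esub> z \<noteq> \<one>\<^bsub>M\<^esub>"
    proof (rule ccontr)
      assume "\<not> ?thesis"
      hence "\<forall>x\<in>carrier M. x [^]\<^bsub>M\<^esub> (2::nat) = \<one>\<^bsub>M\<^esub>" by (simp add: numeral_2_eq_2)
      hence "group_exponent M \<le> 2" unfolding group_exponent_def by (intro Least_le) simp
      with assms(3) show False by simp
    qed
    thus ?thesis using that by blast
  qed
  have fst1: "fst (f (K1, x)) = K1" if xc: "x \<in> carrier M" for x
  proof (cases "x \<otimes>\<^bsub>M\<^esub> x = \<one>\<^bsub>M\<^esub>")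
    case False thus ?thesis using nsq xc by blast
  next
    case True
    define y where "y = inv\<^bsub>M\<^esub> z \<otimes>\<^bsub>M\<^esub> x"
    have yc: "y \<in> carrier M" using y_def zc xc by simp
    have "y \<otimes>\<^bsub>M\<^esub> y = inv\<^bsub>M\<^esub> (z \<otimes>\<^bsub>M\<^esub> z) \<otimes>\<^bsub>M\<^esub> (x \<otimes>\<^bsub>M\<^esub> x)" unfolding y_def using zc xc
      by (simp add: inv_mult m_ac)
    hence yy: "y \<otimes>\<^bsub>M\<^esub> y \<noteq> \<one>\<^bsub>M\<^esub>" proof -
      have "inv\<^bsub>M\<^esub> (z \<otimes>\<^bsub>M\<^esub> z) \<noteq> \<one>\<^bsub>M\<^esub>" using zz zc by simp
      moreover have "inv\<^bsub>M\<^esub> (z \<otimes>\<^bsub>M\<^esub> z) \<otimes>\<^bsub>M\<^esub> (x \<otimes>\<^bsub>M\<^esub> x) = inv\<^bsub>M\<^esub> (z \<otimes>\<^bsub>M\<^esub> z)"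
        using True zc by (simp only: r_one inv_closed m_closed)
      ultimately show ?thesis using \<open>y \<otimes>\<^bsub>M\<^esub> y = _\<close> by simp
    qed
    have zy: "z \<otimes>\<^bsub>M\<^esub> y = x" unfolding y_def using zc xc by (simp add: m_assoc[symmetric])
    obtain a where a: "f (K1, z) = (K1, a)" using nsq[OF zc zz] by (metis prod.collapse)
    obtain b where b: "f (K1, y) = (K1, b)" using nsq[OF yc yy] by (metis prod.collapse)
    have "f (?m (K1,z) (K1,y)) \<in> {?m (f (K1,z)) (f (K1,y)), ?m (f (K1,y)) (f (K1,z))}"
      using hom S zc yc by blast
    hence "f (K1, x) \<in> {(K1, a \<otimes>\<^bsub>M\<^esub> b), (K1, b \<otimes>\<^bsub>M\<^esub> a)}" using a b m11 zy by simp
    thus ?thesis by auto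
  qed
  define g where "g x = snd (f (K1, x))" for x
  have fg: "f (K1, x) = (K1, g x)" if "x \<in> carrier M" for x
    using fst1[OF that] unfolding g_def by (metis prod.collapse)
  have gc: "g x \<in> carrier M" if "x \<in> carrier M" for x
    using fS[of "(K1,x)"] S that fg by auto
  have part1: "\<forall>x\<in>carrier M. \<exists>!y. y \<in> carrier M \<and> f (K1, x) = (K1, y)"
    using fg gc by auto
  have h_eq: "(THE y. y \<in> carrier M \<and> f (K1, x) = (K1, y)) = g x" if "x \<in> carrier M" for x
    using fg[OF that] gc[OF that] by (intro the_equality) auto
  have gmul: "g (x \<otimes>\<^bsub>M\<^esub> y) = g x \<otimes>\<^bsub>M\<^esub> g y" if xc: "x \<in> carrier M" and yc: "y \<in> carrier M" for x y
  proof -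
    have "f (?m (K1,x) (K1,y)) \<in> {?m (f (K1,x)) (f (K1,y)), ?m (f (K1,y)) (f (K1,x))}"
      using hom S xc yc by blast
    hence "(K1, g (x \<otimes>\<^bsub>M\<^esub> y)) \<in> {(K1, g x \<otimes>\<^bsub>M\<^esub> g y), (K1, g y \<otimes>\<^bsub>M\<^esub> g x)}"
      using fg xc yc m11 by simp
    thus ?thesis using m_comm gc xc yc by auto
  qed
  have ginj: "inj_on g (carrier M)"
  proof (rule inj_onI)
    fix x y assume xc: "x \<in> carrier M" and yc: "y \<in> carrier M" and "g x = g y"
    hence "f (K1, x) = f (K1, y)" using fg by simp
    hence "(K1, x) = (K1, y)" by (rule inj_onD[OF inj]) (simp_all add: LM_carrier_def xc yc)
    thus "x = y" by simp
  qed
  have gbij: "bij_betw g (carrier M) (carrier M)"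
    unfolding bij_betw_def using ginj endo_inj_surj[OF assms(2) _ ginj] gc by blast
  let ?h = "\<lambda>x. THE y. y \<in> carrier M \<and> f (K1, x) = (K1, y)"
  have "?h \<in> hom M M"
    by (rule homI) (simp_all add: h_eq gc gmul)
  moreover have "bij_betw ?h (carrier M) (carrier M)"
    using gbij by (subst bij_betw_cong[where g = g]) (simp_all add: h_eq)
  ultimately have "?h \<in> iso M M" by (simp add: iso_def)
  with part1 show ?thesis by blast
qed

end
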